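(* Let $\mathcal{H}$ be a real Hilbert space of dimension $d$, $G>0$, $\mathcal{G}=\{g\in\mathcal{H}:\|g\|\le G\}$, $\theta\in\mathcal{H}$ fixed, and $h:\mathbb{R}\to\mathbb{R}$ an even convex function that is increasing on $[0,\infty)$. Consider the one-round game \[ H=\min_{w\in\mathcal{H}}\max_{g\in\mathcal{G}}\ \langle w,g\rangle+h(\|\theta-g\|). \] If $d>1$, $h$ is twice differentiable, and $h''(x)\le h'(x)/x$ for all $x>0$, then \[ H=h\Big(\sqrt{\|\theta\|^2+G^2}\Big)\qquad\text{and}\qquad w^*=\frac{\theta}{\sqrt{\|\theta\|^2+G^2}}\,h'\Big(\sqrt{\|\theta\|^2+G^2}\Big), \] and any $g^*\in\mathcal{H}$ with $\langle\theta,g^*\rangle=0$ and $\|g^*\|=G$ is a minimax play for the adversary.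
   Context: Write $H(w,g)=\langle w,g\rangle+h(\|\theta-g\|)$. $w^*=\arg\min_w\max_{g\in\mathcal{G}}H(w,g)$ is the minimax play of the player, and a minimax play of the adversary is a $g^*\in\arg\max_{g\in\mathcal{G}}H(w^*,g)$. *)

theory Defs
  imports "HOL-Analysis.Analysis"
begin

definition game_payoff :: "(real \<Rightarrow> real) \<Rightarrow> 'a::real_inner \<Rightarrow> 'a \<Rightarrow> 'a \<Rightarrow> real" where
  "game_payoff h \<theta> w g = inner w g + h (norm (\<theta> - g))"

definition game_value :: "(real \<Rightarrow> real) \<Rightarrow> 'a::real_inner \<Rightarrow> real \<Rightarrow> real" where
  "game_value h \<theta> G = (INF w. SUP g\<in>cball 0 G. game_payoff h \<theta> w g)"

end

theory Submission
  imports Defs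
begin

lemma key_ineq:
  fixes h :: "real \<Rightarrow> real"
  assumes incr: "mono_on {0..} h"
    and diff1: "\<And>x. h differentiable (at x)"
    and diff2: "\<And>x. (deriv h) differentiable (at x)"
    and curv: "\<And>x. x > 0 \<Longrightarrow> deriv (deriv h) x \<le> deriv h x / x"
    and r: "r > 0" and s: "s \<ge> 0"
  shows "h s - (deriv h r / r) * s^2 / 2 \<le> h r - (deriv h r / r) * r^2 / 2"
proof -
  have d1: "\<And>x. DERIV h x :> deriv h x" using diff1 DERIV_deriv_iff_real_differentiable by blast
  have d2: "\<And>x. DERIV (deriv h) x :> deriv (deriv h) x" using diff2 DERIV_deriv_iff_real_differentiable by blast
  have pos: "deriv h x \<ge> 0" if "x \<ge> 0" for x
  proof (rule ccontr)
    assume "\<not> deriv h x \<ge> 0"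
    then obtain d where "d > 0" and dd: "\<forall>e>0. e < d \<longrightarrow> h x > h (x + e)"
      using DERIV_neg_dec_right[OF d1[of x]] by auto
    then have "h x > h (x + d/2)" by auto
    moreover have "h x \<le> h (x + d/2)" using incr that \<open>d>0\<close> by (auto simp: mono_on_def)
    ultimately show False by simp
  qed
  have kdec: "deriv h b / b \<le> deriv h a / a" if "0 < a" "a \<le> b" for a b
  proof (rule DERIV_nonpos_imp_nonincreasing[where f = "\<lambda>x. deriv h x / x"])
    show "a \<le> b" by fact
    fix x assume x: "a \<le> x" "x \<le> b"
    then have "x > 0" using that by simp
    have "DERIV (\<lambda>x. deriv h x / x) x :> (deriv (deriv h) x * x - 1 * deriv h x) / x ^ Suc (Suc 0)"
      using DERIV_quotient[OF d2[of x] DERIV_ident] \<open>x>0\<close> by simp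
    moreover have "(deriv (deriv h) x * x - 1 * deriv h x) / x ^ Suc (Suc 0) \<le> 0"
    proof -
      have "deriv (deriv h) x * x \<le> deriv h x"
        using curv[OF \<open>x>0\<close>] \<open>x>0\<close> by (simp add: pos_le_divide_eq)
      then show ?thesis by (intro divide_nonpos_nonneg) auto
    qed
    ultimately show "\<exists>y. DERIV (\<lambda>x. deriv h x / x) x :> y \<and> y \<le> 0" by blast
  qed
  define c where "c = deriv h r / r"
  define F where "F = (\<lambda>x. h x - c * x^2 / 2)"
  have dF: "DERIV F x :> deriv h x - c * x" for x
    unfolding F_def using d1[of x] by (auto intro!: derivative_eq_intros)
  have "F s \<le> F r"
  proof (cases "s \<le> r")
    case True
    have "F s \<le> F r"
    proof (rule DERIV_nonneg_imp_nondecreasing[OF True])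
      fix x assume x: "s \<le> x" "x \<le> r"
      have "deriv h x - c * x \<ge> 0"
      proof (cases "x = 0")
        case True then show ?thesis using pos[of 0] by simp
      next
        case False
        then have "x > 0" using x s by simp
        have "c \<le> deriv h x / x" unfolding c_def using kdec[OF \<open>x>0\<close> x(2)] .
        then have "c * x \<le> deriv h x" using \<open>x>0\<close> by (simp add: le_divide_eq)
        then show ?thesis by simp
      qed
      then show "\<exists>y. DERIV F x :> y \<and> y \<ge> 0" using dF by blast
    qed
    then show ?thesis .
  next
    case False
    then have rs: "r \<le> s" by simp
    show "F s \<le> F r"
    proof (rule DERIV_nonpos_imp_nonincreasing[OF rs])
      fix x assume x: "r \<le> x" "x \<le> s"
      then have "x > 0" using r by simp
      have "deriv h x / x \<le> c" unfolding c_def using kdec[OF r x(1)] .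
      then have "deriv h x \<le> c * x" using \<open>x>0\<close> by (simp add: divide_le_eq)
      then show "\<exists>y. DERIV F x :> y \<and> y \<le> 0" using dF by (intro exI[of _ "deriv h x - c * x"]) auto
    qed
  qed
  then show ?thesis unfolding F_def c_def by simp
qed

lemma exists_orth:
  fixes \<theta> :: "'a::euclidean_space"
  assumes "DIM('a) > 1"
  shows "\<exists>v. v \<noteq> 0 \<and> inner \<theta> v = 0"
proof -
  obtain b1 b2 :: 'a where b: "b1 \<in> Basis" "b2 \<in> Basis" "b1 \<noteq> b2"
  proof -
    have "\<not> (\<forall>x\<in>(Basis::'a set). \<forall>y\<in>Basis. x = y)"
    proof
      assume "\<forall>x\<in>(Basis::'a set). \<forall>y\<in>Basis. x = y"
      then have "card (Basis::'a set) \<le> 1" using card_le_Suc0_iff_eq[of "Basis::'a set"] by simp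
      with assms show False by simp
    qed
    then show ?thesis using that by auto
  qed
  define v where "v = (inner \<theta> b2) *\<^sub>R b1 - (inner \<theta> b1) *\<^sub>R b2"
  have "inner \<theta> v = 0" unfolding v_def by (simp add: inner_diff_right algebra_simps)
  show ?thesis
  proof (cases "v = 0")
    case False then show ?thesis using \<open>inner \<theta> v = 0\<close> by blast
  next
    case True
    then have "inner v b1 = 0" by simp
    then have "inner \<theta> b2 = 0" unfolding v_def using b by (simp add: inner_diff_left inner_Basis)
    then show ?thesis using b nonzero_Basis by blast
  qed
qed

theorem lemma5:
  fixes h :: "real \<Rightarrow> real" and \<theta> :: "'a::euclidean_space" and G :: real
  assumes G_pos: "G > 0"
    and dim: "DIM('a) > 1"
    and even: "\<And>x. h (- x) = h x"
    and convex: "convex_on UNIV h"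
    and incr: "mono_on {0..} h"
    and diff1: "\<And>x. h differentiable (at x)"
    and diff2: "\<And>x. (deriv h) differentiable (at x)"
    and curv: "\<And>x. x > 0 \<Longrightarrow> deriv (deriv h) x \<le> deriv h x / x"
  shows "let r = sqrt (norm \<theta> ^ 2 + G ^ 2);
             wstar = (deriv h r / r) *\<^sub>R \<theta>
         in game_value h \<theta> G = h r
          \<and> (\<forall>w. (SUP g\<in>cball 0 G. game_payoff h \<theta> wstar g)
                   \<le> (SUP g\<in>cball 0 G. game_payoff h \<theta> w g))
          \<and> (SUP g\<in>cball 0 G. game_payoff h \<theta> wstar g) = game_value h \<theta> G
          \<and> (\<forall>gs. inner \<theta> gs = 0 \<and> norm gs = G \<longrightarrow>
               (\<forall>g\<in>cball 0 G. game_payoff h \<theta> wstar g \<le> game_payoff h \<theta> wstar gs))"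
proof -
  define r where "r = sqrt (norm \<theta> ^ 2 + G ^ 2)"
  define c where "c = deriv h r / r"
  define wstar where "wstar = c *\<^sub>R \<theta>"
  define S where "S = (\<lambda>w. SUP g\<in>cball 0 G. game_payoff h \<theta> w g)"
  have rpos: "r > 0" unfolding r_def using G_pos
    by (intro real_sqrt_gt_zero) (simp add: add_nonneg_pos)
  have r2: "r^2 = norm \<theta> ^ 2 + G ^ 2" unfolding r_def by simp
  have hcont: "continuous_on UNIV h"
    using diff1 by (intro differentiable_imp_continuous_on) (simp add: differentiable_on_def)
  have Pcont: "continuous_on UNIV (game_payoff h \<theta> w)" for w
    unfolding game_payoff_def
    by (intro continuous_intros continuous_on_compose2[OF hcont]) auto
  have bdd: "bdd_above (game_payoff h \<theta> w ` cball 0 G)" for w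
    by (rule bounded_imp_bdd_above, rule compact_imp_bounded,
        rule compact_continuous_image[OF continuous_on_subset[OF Pcont]]) auto
  have cnn: "c \<ge> 0"
  proof -
    have d1: "DERIV h r :> deriv h r" using diff1 DERIV_deriv_iff_real_differentiable by blast
    have "deriv h r \<ge> 0"
    proof (rule ccontr)
      assume "\<not> deriv h r \<ge> 0"
      then obtain d where "d > 0" and dd: "\<forall>e>0. e < d \<longrightarrow> h r > h (r + e)"
        using DERIV_neg_dec_right[OF d1] by auto
      then have "h r > h (r + d/2)" by auto
      moreover have "h r \<le> h (r + d/2)" using incr rpos \<open>d>0\<close> by (auto simp: mono_on_def)
      ultimately show False by simp
    qed
    then show ?thesis unfolding c_def using rpos by simp
  qed
  have upper: "game_payoff h \<theta> wstar g \<le> h r" if g: "g \<in> cball 0 G" for g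
  proof -
    define s where "s = norm (\<theta> - g)"
    have ng: "norm g \<le> G" using g by simp
    have "s^2 = norm \<theta> ^2 - 2 * inner \<theta> g + norm g ^ 2"
      unfolding s_def by (simp add: power2_norm_eq_inner inner_diff_left inner_diff_right inner_commute)
    moreover have "norm g ^ 2 \<le> G^2" using ng by (simp add: power_mono)
    ultimately have "inner \<theta> g \<le> (r^2 - s^2) / 2" using r2 by simp
    then have "c * inner \<theta> g \<le> c * ((r^2 - s^2) / 2)" using cnn by (rule mult_left_mono)
    moreover have "h s - c * s^2 / 2 \<le> h r - c * r^2 / 2"
      unfolding c_def using key_ineq[OF incr diff1 diff2 curv rpos, of s] by (simp add: s_def)
    ultimately show ?thesis unfolding game_payoff_def wstar_def s_def[symmetric]
      by (simp add: algebra_simps)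
  qed
  have atgs: "game_payoff h \<theta> w gs = inner w gs + h r" if "inner \<theta> gs = 0" "norm gs = G" for w gs
  proof -
    have gg: "inner gs gs = G^2" using that(2) power2_norm_eq_inner by metis
    have "norm (\<theta> - gs) ^ 2 = r^2" using that r2 gg
      by (simp add: power2_norm_eq_inner inner_diff_left inner_diff_right inner_commute)
    then have "norm (\<theta> - gs) = r" using rpos by (simp add: power2_eq_iff_nonneg)
    then show ?thesis unfolding game_payoff_def by simp
  qed
  obtain v where v: "v \<noteq> 0" "inner \<theta> v = 0" using exists_orth[OF dim] by blast
  define u where "u = (G / norm v) *\<^sub>R v"
  have u: "inner \<theta> u = 0" "norm u = G" "inner \<theta> (-u) = 0" "norm (-u) = G"
    unfolding u_def using v G_pos by auto
  have lower: "h r \<le> S w" for w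
  proof (cases "inner w u \<ge> 0")
    case True
    have "h r \<le> game_payoff h \<theta> w u" using atgs[OF u(1,2)] True by simp
    also have "\<dots> \<le> S w" unfolding S_def by (rule cSUP_upper[OF _ bdd]) (use u in simp)
    finally show ?thesis .
  next
    case False
    have "h r \<le> game_payoff h \<theta> w (-u)" using atgs[OF u(3,4)] False by simp
    also have "\<dots> \<le> S w" unfolding S_def by (rule cSUP_upper[OF _ bdd]) (use u in simp)
    finally show ?thesis .
  qed
  have Sw: "S wstar = h r"
  proof (rule antisym)
    show "S wstar \<le> h r" unfolding S_def by (rule cSUP_least) (use upper G_pos in auto)
  qed (rule lower)
  have gv: "game_value h \<theta> G = h r"
  proof -
    have "game_value h \<theta> G = (INF w. S w)" unfolding game_value_def S_def ..
    also have "\<dots> = h r"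
    proof (rule antisym)
      show "(INF w. S w) \<le> h r" using cINF_lower[of S UNIV wstar] Sw lower
        by (metis bdd_belowI2 iso_tuple_UNIV_I)
      show "h r \<le> (INF w. S w)" by (rule cINF_greatest) (auto intro: lower)
    qed
    finally show ?thesis .
  qed
  have Sdef: "S w = (SUP g\<in>cball 0 G. game_payoff h \<theta> w g)" for w unfolding S_def ..
  show ?thesis
    unfolding Let_def r_def[symmetric] c_def[symmetric] wstar_def[symmetric] Sdef[symmetric]
  proof (intro conjI allI impI ballI)
    show "game_value h \<theta> G = h r" by (rule gv)
    show "S wstar \<le> S w" for w using Sw lower by simp
    show "S wstar = game_value h \<theta> G" using Sw gv by simp
    fix gs g :: 'a assume "inner \<theta> gs = 0 \<and> norm gs = G" "g \<in> cball 0 G"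
    then show "game_payoff h \<theta> wstar g \<le> game_payoff h \<theta> wstar gs"
      using upper atgs[of gs wstar] by (simp add: wstar_def)
  qed
qed

end
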